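(* Let $n,d\in\mathbb{N}$. Let $\tilde Z=(\tilde Z_{j,k})_{j\in\{0,1\},k\in[n]}$ be a $2\times n$ array of i.i.d. random vectors, each uniformly distributed on $\{0,1\}^d$ (i.e. with i.i.d. $\mathrm{Ber}(1/2)$ coordinates), let $U=(U_1,\dots,U_n)$ be uniform on $\{0,1\}^n$ and independent of $\tilde Z$, and let $S_n=(Z_1,\dots,Z_n)$ with $Z_k=\tilde Z_{U_k,k}$. Call $i\in[d]$ a bad coordinate if $Z_k(i)=0$ for all $k\in[n]$, and let $B\in\{0,1\}^d$ be given by $B(i)=1$ iff $i$ is a bad coordinate, with $\|B\|_0$ the number of bad coordinates. Then $$H(U\mid B,\tilde Z)\le n\,\mathbb{E}\big[2^{-\|B\|_0}\big],$$ where entropy is measured in bits.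
   Context: $H(\cdot\mid\cdot)$ denotes conditional Shannon entropy (base-2 logarithm, so that $H(U)=n$). *)

theory Defs
  imports "HOL-Probability.Probability"
begin

definition cond_entropy2 :: "'w pmf \<Rightarrow> ('w \<Rightarrow> 'x) \<Rightarrow> ('w \<Rightarrow> 'y) \<Rightarrow> real" where
  "cond_entropy2 M X Y =
     (let P = map_pmf (\<lambda>w. (X w, Y w)) M; Q = map_pmf Y M in
      - (\<Sum>xy\<in>set_pmf P. pmf P xy * log 2 (pmf P xy / pmf Q (snd xy))))"

text \<open>Sample space: pairs (U, Zt) with U : [n] -> {0,1} and
  Zt : {0,1} x [n] -> {0,1}^d (coordinates indexed by [d]); bits are booleans
  (True = 1), indices are 0-based.\<close>
definition sample_space :: "nat \<Rightarrow> nat \<Rightarrow> ((nat \<Rightarrow> bool) \<times> (bool \<times> nat \<Rightarrow> nat \<Rightarrow> bool)) set" where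
  "sample_space n d =
     (PiE {..<n} (\<lambda>_. UNIV)) \<times> (PiE (UNIV \<times> {..<n}) (\<lambda>_. PiE {..<d} (\<lambda>_. UNIV)))"

definition Zsel :: "(nat \<Rightarrow> bool) \<Rightarrow> (bool \<times> nat \<Rightarrow> nat \<Rightarrow> bool) \<Rightarrow> nat \<Rightarrow> nat \<Rightarrow> bool" where
  "Zsel U Zt k = Zt (U k, k)"

definition bad_vec :: "nat \<Rightarrow> nat \<Rightarrow> (nat \<Rightarrow> bool) \<Rightarrow> (bool \<times> nat \<Rightarrow> nat \<Rightarrow> bool) \<Rightarrow> nat \<Rightarrow> bool" where
  "bad_vec n d U Zt = (\<lambda>i. if i < d then (\<forall>k<n. \<not> Zsel U Zt k i) else False)"

definition num_bad :: "nat \<Rightarrow> nat \<Rightarrow> (nat \<Rightarrow> bool) \<Rightarrow> (bool \<times> nat \<Rightarrow> nat \<Rightarrow> bool) \<Rightarrow> nat" where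
  "num_bad n d U Zt = card {i. i < d \<and> bad_vec n d U Zt i}"

end

theory Submission
  imports Defs
begin

lemma entropy_uniform:
  fixes S :: "'w set" and X :: "'w \<Rightarrow> 'x" and Y :: "'w \<Rightarrow> 'y"
  assumes fin: "finite S" and ne: "S \<noteq> {}" and inj: "inj_on (\<lambda>w. (X w, Y w)) S"
  shows "cond_entropy2 (pmf_of_set S) X Y
     = (\<Sum>w\<in>S. log 2 (card {w'\<in>S. Y w' = Y w})) / card S"
proof -
  define XY where "XY = (\<lambda>w. (X w, Y w))"
  define P where "P = map_pmf XY (pmf_of_set S)"
  define Q where "Q = map_pmf Y (pmf_of_set S)"
  have setP: "set_pmf P = XY ` S" using fin ne by (simp add: P_def)
  have pP: "pmf P (XY w) = 1 / card S" if "w \<in> S" for w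
  proof -
    have "S \<inter> XY -` {XY w} = {w}" using inj that unfolding XY_def inj_on_def by auto
    then show ?thesis unfolding P_def pmf_map using fin ne by (simp add: measure_pmf_of_set)
  qed
  have pQ: "pmf Q (snd (XY w)) = card {w'\<in>S. Y w' = Y w} / card S" if "w \<in> S" for w
  proof -
    have "S \<inter> Y -` {Y w} = {w'\<in>S. Y w' = Y w}" by auto
    then show ?thesis unfolding Q_def pmf_map using fin ne by (simp add: measure_pmf_of_set XY_def)
  qed
  have cpos: "card {w'\<in>S. Y w' = Y w} > 0" if "w \<in> S" for w
    using that fin by (subst card_gt_0_iff) auto
  have Npos: "real (card S) > 0" using fin ne by (simp add: card_gt_0_iff)
  have "cond_entropy2 (pmf_of_set S) X Y
     = - (\<Sum>xy\<in>XY ` S. pmf P xy * log 2 (pmf P xy / pmf Q (snd xy)))"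
    unfolding cond_entropy2_def Let_def P_def[symmetric] XY_def[symmetric] Q_def[symmetric] setP ..
  also have "\<dots> = - (\<Sum>w\<in>S. pmf P (XY w) * log 2 (pmf P (XY w) / pmf Q (snd (XY w))))"
    using inj by (simp add: sum.reindex XY_def)
  also have "\<dots> = - (\<Sum>w\<in>S. (1 / card S) * log 2 (1 / card {w'\<in>S. Y w' = Y w}))"
    using Npos by (intro arg_cong[where f=uminus] sum.cong refl) (simp add: pP pQ)
  also have "\<dots> = (\<Sum>w\<in>S. log 2 (card {w'\<in>S. Y w' = Y w})) / card S"
    using cpos by (simp add: log_divide sum_divide_distrib[symmetric] sum_negf[symmetric])
  finally show ?thesis .
qed

lemma finite_S: "finite (sample_space n d)"
  unfolding sample_space_def by (intro finite_cartesian_product finite_PiE) auto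

lemma nonempty_S: "sample_space n d \<noteq> {}"
  unfolding sample_space_def by (auto simp: PiE_eq_empty_iff)

definition Aev :: "nat \<Rightarrow> nat \<Rightarrow> nat \<Rightarrow> ((nat \<Rightarrow> bool) \<times> (bool \<times> nat \<Rightarrow> nat \<Rightarrow> bool)) \<Rightarrow> bool" where
  "Aev n d k w = (\<forall>i<d. bad_vec n d (fst w) (snd w) i \<longrightarrow> \<not> snd w (\<not> fst w k, k) i)"

lemma fiber_le:
  assumes w: "w \<in> sample_space n d"
  shows "card {w'\<in>sample_space n d. (bad_vec n d (fst w') (snd w'), snd w') = (bad_vec n d (fst w) (snd w), snd w)}
     \<le> 2 ^ card {k\<in>{..<n}. Aev n d k w}"
proof -
  define F where "F = {w'\<in>sample_space n d. (bad_vec n d (fst w') (snd w'), snd w') = (bad_vec n d (fst w) (snd w), snd w)}"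
  define A where "A = {k\<in>{..<n}. Aev n d k w}"
  have claim: "fst w' k = fst w k" if "w' \<in> F" "k < n" "\<not> Aev n d k w" for w' k
  proof (rule ccontr)
    assume ne: "fst w' k \<noteq> fst w k"
    from that(3) obtain i where i: "i < d" "bad_vec n d (fst w) (snd w) i" "snd w (\<not> fst w k, k) i"
      unfolding Aev_def by auto
    have "bad_vec n d (fst w') (snd w') i" "snd w' = snd w" using that(1) i(2) unfolding F_def by auto
    then have "\<not> snd w (fst w' k, k) i" using that(2) i(1) unfolding bad_vec_def Zsel_def by auto
    moreover have "fst w' k = (\<not> fst w k)" using ne by auto
    ultimately show False using i(3) by simp
  qed
  have inj: "inj_on (\<lambda>w'. restrict (fst w') A) F"
  proof (rule inj_onI)
    fix w1 w2 assume w1: "w1 \<in> F" and w2: "w2 \<in> F" and eq: "restrict (fst w1) A = restrict (fst w2) A"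
    have s: "snd w1 = snd w2" using w1 w2 unfolding F_def by auto
    have p1: "fst w1 \<in> PiE {..<n} (\<lambda>_. UNIV)" and p2: "fst w2 \<in> PiE {..<n} (\<lambda>_. UNIV)"
      using w1 w2 unfolding F_def sample_space_def by auto
    have "fst w1 = fst w2"
    proof (rule PiE_ext[OF p1 p2])
      fix k assume k: "k \<in> {..<n}"
      show "fst w1 k = fst w2 k"
      proof (cases "k \<in> A")
        case True then show ?thesis using fun_cong[OF eq, of k] by simp
      next
        case False then have "\<not> Aev n d k w" using k unfolding A_def by auto
        then show ?thesis using claim[OF w1 _] claim[OF w2 _] k by auto
      qed
    qed
    then show "w1 = w2" using s by (simp add: prod_eq_iff)
  qed
  have img: "(\<lambda>w'. restrict (fst w') A) ` F \<subseteq> PiE A (\<lambda>_. UNIV)" by auto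
  have finA: "finite A" unfolding A_def by auto
  have "card F \<le> card (PiE A (\<lambda>_. UNIV :: bool set))"
    using card_inj_on_le[OF inj img] finA by (simp add: finite_PiE)
  also have "\<dots> = 2 ^ card A" using finA by (simp add: card_PiE)
  finally show ?thesis unfolding F_def A_def .
qed


lemma count_pow:
  fixes P :: "nat \<Rightarrow> bool"
  shows "real (card {v \<in> PiE {..<d} (\<lambda>_. UNIV :: bool set). \<forall>i<d. P i \<longrightarrow> \<not> v i})
     = 2 ^ d * 2 powr (- real (card {i. i < d \<and> P i}))"
proof -
  have eqs: "{v \<in> PiE {..<d} (\<lambda>_. UNIV :: bool set). \<forall>i<d. P i \<longrightarrow> \<not> v i}
       = PiE {..<d} (\<lambda>i. if P i then {False} else UNIV)"
  proof (intro set_eqI iffI)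
    fix v assume "v \<in> {v \<in> PiE {..<d} (\<lambda>_. UNIV :: bool set). \<forall>i<d. P i \<longrightarrow> \<not> v i}"
    then show "v \<in> PiE {..<d} (\<lambda>i. if P i then {False} else UNIV)"
      unfolding PiE_iff by auto
  next
    fix v assume "v \<in> PiE {..<d} (\<lambda>i. if P i then {False} else UNIV)"
    then have "\<forall>i<d. v i \<in> (if P i then {False} else UNIV)" "v \<in> extensional {..<d}"
      unfolding PiE_iff by auto
    then show "v \<in> {v \<in> PiE {..<d} (\<lambda>_. UNIV :: bool set). \<forall>i<d. P i \<longrightarrow> \<not> v i}"
      unfolding PiE_iff by auto
  qed
  have "card (PiE {..<d} (\<lambda>i. if P i then {False} else (UNIV :: bool set)))
      = (\<Prod>i<d. if \<not> P i then 2 else 1)"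
    by (simp add: card_PiE if_distrib cong: if_cong) (intro prod.cong refl, auto)
  also have "\<dots> = (\<Prod>i\<in>{i\<in>{..<d}. \<not> P i}. 2)"
    by (subst prod.inter_filter) auto
  also have "\<dots> = 2 ^ card {i\<in>{..<d}. \<not> P i}" by simp
  finally have c: "card {v \<in> PiE {..<d} (\<lambda>_. UNIV :: bool set). \<forall>i<d. P i \<longrightarrow> \<not> v i} = 2 ^ card {i\<in>{..<d}. \<not> P i}"
    using eqs by simp
  have split: "card {i\<in>{..<d}. \<not> P i} + card {i. i < d \<and> P i} = d"
  proof -
    have "card ({i\<in>{..<d}. \<not> P i} \<union> {i. i < d \<and> P i}) = card {i\<in>{..<d}. \<not> P i} + card {i. i < d \<and> P i}"
      by (rule card_Un_disjoint) auto
    moreover have "{i\<in>{..<d}. \<not> P i} \<union> {i. i < d \<and> P i} = {..<d}" by auto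
    ultimately show ?thesis by simp
  qed
  have "real (2 ^ card {i\<in>{..<d}. \<not> P i} :: nat) = 2 powr (real (card {i\<in>{..<d}. \<not> P i}))"
    by (simp add: powr_realpow)
  also have "\<dots> = 2 powr (real d - real (card {i. i < d \<and> P i}))"
  proof -
    have "real (card {i\<in>{..<d}. \<not> P i}) + real (card {i. i < d \<and> P i}) = real d"
      using split by (metis of_nat_add)
    then have "real (card {i\<in>{..<d}. \<not> P i}) = real d - real (card {i. i < d \<and> P i})"
      by linarith
    then show ?thesis by simp
  qed
  also have "\<dots> = 2 ^ d * 2 powr (- real (card {i. i < d \<and> P i}))"
    by (simp add: powr_diff powr_minus powr_realpow divide_inverse)
  finally show ?thesis using c by simp
qed

lemma key:
  assumes k: "k < n"
  shows "(\<Sum>w\<in>sample_space n d. if Aev n d k w then 1 else 0 :: real)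
       = (\<Sum>w\<in>sample_space n d. 2 powr (- real (num_bad n d (fst w) (snd w))))"
proof -
  define S where "S = sample_space n d"
  define V where "V = PiE {..<d} (\<lambda>_. UNIV :: bool set)"
  define S0 where "S0 = {w\<in>S. snd w (\<not> fst w k, k) = (\<lambda>_. undefined)}"
  define g where "g = (\<lambda>(w :: (nat \<Rightarrow> bool) \<times> (bool \<times> nat \<Rightarrow> nat \<Rightarrow> bool), v :: nat \<Rightarrow> bool).
        (fst w, (snd w)((\<not> fst w k, k) := v)))"
  define h where "h = (\<lambda>w :: (nat \<Rightarrow> bool) \<times> (bool \<times> nat \<Rightarrow> nat \<Rightarrow> bool).
        ((fst w, (snd w)((\<not> fst w k, k) := (\<lambda>_. undefined))), snd w (\<not> fst w k, k)))"
  have bij: "bij_betw g (S0 \<times> V) S"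
  proof (rule bij_betwI[where g = h])
    have pD: "(\<not> b, k) \<in> UNIV \<times> {..<n}" for b using k by auto
    have undefV: "(\<lambda>_. undefined) \<in> V" unfolding V_def by auto
    show "g \<in> S0 \<times> V \<rightarrow> S"
    proof
      fix x assume x: "x \<in> S0 \<times> V"
      obtain w v where xw: "x = (w, v)" and w: "w \<in> S" and v: "v \<in> V"
        using x unfolding S0_def by auto
      have f: "fst w \<in> PiE {..<n} (\<lambda>_. UNIV)" and s: "snd w \<in> PiE (UNIV \<times> {..<n}) (\<lambda>_. V)"
        using w unfolding S_def sample_space_def V_def by (simp_all only: mem_Times_iff)
      have "(snd w)((\<not> fst w k, k) := v) \<in> PiE (insert (\<not> fst w k, k) (UNIV \<times> {..<n})) (\<lambda>_. V)"
        by (rule PiE_fun_upd[OF v s])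
      then have "(snd w)((\<not> fst w k, k) := v) \<in> PiE (UNIV \<times> {..<n}) (\<lambda>_. V)"
        using pD by (simp add: insert_absorb)
      then show "g x \<in> S" using f unfolding xw g_def S_def sample_space_def V_def by simp
    qed
    show "h \<in> S \<rightarrow> S0 \<times> V"
    proof
      fix w assume w: "w \<in> S"
      have f: "fst w \<in> PiE {..<n} (\<lambda>_. UNIV)" and s: "snd w \<in> PiE (UNIV \<times> {..<n}) (\<lambda>_. V)"
        using w unfolding S_def sample_space_def V_def by (simp_all only: mem_Times_iff)
      have "(snd w)((\<not> fst w k, k) := (\<lambda>_. undefined)) \<in> PiE (insert (\<not> fst w k, k) (UNIV \<times> {..<n})) (\<lambda>_. V)"
        by (rule PiE_fun_upd[OF undefV s])
      then have s2: "(snd w)((\<not> fst w k, k) := (\<lambda>_. undefined)) \<in> PiE (UNIV \<times> {..<n}) (\<lambda>_. V)"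
        using pD by (simp add: insert_absorb)
      have m1: "(fst w, (snd w)((\<not> fst w k, k) := (\<lambda>_. undefined))) \<in> S0"
        using f s2 unfolding S0_def S_def sample_space_def V_def by simp
      have m2: "snd w (\<not> fst w k, k) \<in> V" using PiE_mem[OF s pD] .
      show "h w \<in> S0 \<times> V" using m1 m2 unfolding h_def by simp
    qed
    show "h (g x) = x" if "x \<in> S0 \<times> V" for x
      using that by (auto simp: h_def g_def S0_def)
    show "g (h y) = y" if "y \<in> S" for y
      using that by (auto simp: h_def g_def)
  qed
  have Bg: "bad_vec n d (fst (g (w, v))) (snd (g (w, v))) = bad_vec n d (fst w) (snd w)" for w v
  proof -
    have gw: "g (w, v) = (fst w, (snd w)((\<not> fst w k, k) := v))" by (simp add: g_def)
    have "Zsel (fst w) ((snd w)((\<not> fst w k, k) := v)) j = Zsel (fst w) (snd w) j" for j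
    proof -
      have "(fst w j, j) \<noteq> (\<not> fst w k, k)" by auto
      then show ?thesis unfolding Zsel_def by (rule fun_upd_other)
    qed
    then show ?thesis unfolding gw bad_vec_def by simp
  qed
  have Ag: "Aev n d k (g (w, v)) = (\<forall>i<d. bad_vec n d (fst w) (snd w) i \<longrightarrow> \<not> v i)" for w v
  proof -
    have gw: "g (w, v) = (fst w, (snd w)((\<not> fst w k, k) := v))" by (simp add: g_def)
    show ?thesis unfolding Aev_def Bg unfolding gw by simp
  qed
  have Ng: "num_bad n d (fst (g (w, v))) (snd (g (w, v))) = num_bad n d (fst w) (snd w)" for w v
    unfolding num_bad_def Bg ..
  have finS0: "finite S0" unfolding S0_def S_def using finite_S by auto
  have finV: "finite V" unfolding V_def by (simp add: finite_PiE)
  have re: "(\<Sum>w\<in>S. f w) = (\<Sum>w\<in>S0. \<Sum>v\<in>V. f (g (w, v)))" for f :: "_ \<Rightarrow> real"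
    by (subst sum.reindex_bij_betw[OF bij, symmetric]) (simp add: sum.cartesian_product)
  have cV: "card V = 2 ^ d" unfolding V_def by (simp add: card_PiE)
  have "(\<Sum>w\<in>S. if Aev n d k w then 1 else 0 :: real)
      = (\<Sum>w\<in>S0. real (card {v\<in>V. \<forall>i<d. bad_vec n d (fst w) (snd w) i \<longrightarrow> \<not> v i}))"
    unfolding re Ag using finV by (simp add: sum.If_cases) (simp add: Int_def)
  also have "\<dots> = (\<Sum>w\<in>S0. 2 ^ d * 2 powr (- real (num_bad n d (fst w) (snd w))))"
    unfolding V_def num_bad_def by (intro sum.cong refl count_pow)
  also have "\<dots> = (\<Sum>w\<in>S0. \<Sum>v\<in>V. 2 powr (- real (num_bad n d (fst (g (w, v))) (snd (g (w, v))))))"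
    unfolding Ng sum_constant cV by simp
  also have "\<dots> = (\<Sum>w\<in>S. 2 powr (- real (num_bad n d (fst w) (snd w))))"
    by (rule re[symmetric])
  finally show ?thesis unfolding S_def .
qed


theorem lemmaC3:
  fixes n d :: nat
  defines "M \<equiv> pmf_of_set (sample_space n d)"
  shows "cond_entropy2 M fst (\<lambda>w. (bad_vec n d (fst w) (snd w), snd w))
           \<le> real n * measure_pmf.expectation M
                 (\<lambda>w. 2 powr (- real (num_bad n d (fst w) (snd w))))"
proof -
  define S where "S = sample_space n d"
  have fin: "finite S" unfolding S_def by (rule finite_S)
  have ne: "S \<noteq> {}" unfolding S_def by (rule nonempty_S)
  have Npos: "real (card S) > 0" using fin ne by (simp add: card_gt_0_iff)
  have inj: "inj_on (\<lambda>w. (fst w, (bad_vec n d (fst w) (snd w), snd w))) S"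
    by (auto simp: inj_on_def prod_eq_iff)
  have H: "cond_entropy2 M fst (\<lambda>w. (bad_vec n d (fst w) (snd w), snd w))
     = (\<Sum>w\<in>S. log 2 (card {w'\<in>S. (bad_vec n d (fst w') (snd w'), snd w') = (bad_vec n d (fst w) (snd w), snd w)})) / card S"
    unfolding M_def S_def[symmetric] by (rule entropy_uniform[OF fin ne inj])
  have L: "log 2 (card {w'\<in>S. (bad_vec n d (fst w') (snd w'), snd w') = (bad_vec n d (fst w) (snd w), snd w)})
      \<le> (\<Sum>k<n. if Aev n d k w then 1 else 0 :: real)" if w: "w \<in> S" for w
  proof -
    let ?F = "{w'\<in>S. (bad_vec n d (fst w') (snd w'), snd w') = (bad_vec n d (fst w) (snd w), snd w)}"
    have c1: "card ?F > 0" using fin w by (subst card_gt_0_iff) auto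
    have c2: "card ?F \<le> 2 ^ card {k\<in>{..<n}. Aev n d k w}" using fiber_le w unfolding S_def by blast
    have "log 2 (card ?F) \<le> log 2 (2 ^ card {k\<in>{..<n}. Aev n d k w})"
    proof -
      have "real (card ?F) \<le> real (2 ^ card {k\<in>{..<n}. Aev n d k w})" using c2 by (rule of_nat_mono)
      then show ?thesis using c1 by (subst log_le_cancel_iff) auto
    qed
    also have "\<dots> = real (card {k\<in>{..<n}. Aev n d k w})" by simp
    also have "\<dots> = (\<Sum>k\<in>{k\<in>{..<n}. Aev n d k w}. 1)" by simp
    also have "\<dots> = (\<Sum>k<n. if Aev n d k w then 1 else 0 :: real)"
      by (subst sum.inter_filter) auto
    finally show ?thesis .
  qed
  have "cond_entropy2 M fst (\<lambda>w. (bad_vec n d (fst w) (snd w), snd w))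
      \<le> (\<Sum>w\<in>S. \<Sum>k<n. if Aev n d k w then 1 else 0 :: real) / card S"
    unfolding H using Npos by (intro divide_right_mono sum_mono L) auto
  also have "\<dots> = (\<Sum>k<n. \<Sum>w\<in>S. if Aev n d k w then 1 else 0 :: real) / card S"
    by (subst sum.swap) (rule refl)
  also have "\<dots> = (\<Sum>k<n. \<Sum>w\<in>S. 2 powr (- real (num_bad n d (fst w) (snd w)))) / card S"
    unfolding S_def by (intro arg_cong[where f = "\<lambda>x. x / _"] sum.cong refl key) auto
  also have "\<dots> = real n * ((\<Sum>w\<in>S. 2 powr (- real (num_bad n d (fst w) (snd w)))) / card S)"
    by simp
  also have "\<dots> = real n * measure_pmf.expectation M (\<lambda>w. 2 powr (- real (num_bad n d (fst w) (snd w))))"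
    unfolding M_def S_def[symmetric] using fin ne by (simp add: integral_pmf_of_set)
  finally show ?thesis .
qed

end
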